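(* Let $\{g_d(n)\}_{d\geq 0,\,n\geq 1}$ be a double sequence of positive real numbers such that $g_d(1)=1$ for all $d\geq 0$ and \[ 0 \leq g_d(n) - n^d \leq \bigl(g_0(n)-1\bigr)\,(n-1)^{d}\qquad\text{for all } d\geq 0,\ n\geq 1 . \] Suppose there is a real number $r$ with $0<r\leq 1$ such that $q^{g_0}(n)\leq r^{-n}$ for all $n\geq 1$. For $n\geq 3$ define $D^{g}(n)$ by \[ D^{g}(n):=\begin{cases} -2\log_{9/8}(r)\, n, & n\equiv 0 \pmod 3,\\[2pt] \log_{9/8}(3)-2n\log_{9/8}(r)-\log_{9/8}(n+2), & n\equiv 1 \pmod 3,\\[2pt] \log_{9/8}(2)-(n+1)\log_{9/8}(r), & n\equiv 2 \pmod 3,\ n\neq 5,\\[2pt] \log_{9/8}\bigl(2\,q^{g_0}(4)\,q^{g_0}(6)\bigr), & n=5 . \end{cases} \] Let $n\geq 3$ and let $d$ be an integer with $d> D^{g}(n)$. Then \[ \frac{\bigl(q^{g_d}(n)\bigr)^2}{q^{g_d}(n-1)\,q^{g_d}(n+1)}<1 \quad\text{if and only if}\quad n\equiv 1 \pmod 3 . \]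
   Context: For a double sequence $\{g_d(n)\}_{d\geq 0,n\geq 1}$ of positive reals, the numbers $q^{g_d}(n)$ ($n\geq 0$) are defined as the coefficients of the power series \[ \sum_{n=0}^{\infty} q^{g_d}(n)\,t^n := \frac{1}{1-\sum_{n=1}^{\infty} g_d(n)\,t^n}, \] equivalently $q^{g_d}(0)=1$ and, for $n\geq 1$, $q^{g_d}(n)=\sum_{k\le n}\sum_{m_1+\dots+m_k=n,\ m_i\geq 1} g_d(m_1)\cdots g_d(m_k)$ (sum over all compositions of $n$). $\log_{9/8}$ denotes the logarithm to base $9/8$. *)

theory Defs
  imports "HOL-Analysis.Analysis" "HOL-Computational_Algebra.Formal_Power_Series"
begin

text \<open>q^{g}(n): coefficients of 1/(1 - sum_{n>=1} g(n) t^n), for a sequence g indexed by n >= 1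
  (the value g 0 is ignored).\<close>
definition q_seq :: "(nat \<Rightarrow> real) \<Rightarrow> nat \<Rightarrow> real" where
  "q_seq g n = fps_nth (inverse (1 - Abs_fps (\<lambda>m. if m = 0 then 0 else g m))) n"

definition D_g :: "(nat \<Rightarrow> real) \<Rightarrow> real \<Rightarrow> nat \<Rightarrow> real" where
  "D_g g0 r n =
    (if n mod 3 = 0 then - 2 * log (9/8) r * real n
     else if n mod 3 = 1 then log (9/8) 3 - 2 * real n * log (9/8) r - log (9/8) (real n + 2)
     else if n \<noteq> 5 then log (9/8) 2 - (real n + 1) * log (9/8) r
     else log (9/8) (2 * q_seq g0 4 * q_seq g0 6))"

end

theory Submission
  imports Defs
begin


lemma q_zero: "q_seq g 0 = 1"
  unfolding q_seq_def by simp

lemma q_rec: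
  assumes "n \<ge> 1"
  shows "q_seq g n = (\<Sum>m=1..n. g m * q_seq g (n-m))"
proof -
  define B :: "real fps" where "B = 1 - Abs_fps (\<lambda>m. if m = 0 then 0 else g m)"
  have B0: "fps_nth B 0 = 1" by (simp add: B_def)
  have "B * inverse B = 1" using B0 by (intro inverse_mult_eq_1') simp
  hence "fps_nth (B * inverse B) n = 0" using assms by simp
  hence "(\<Sum>i=0..n. fps_nth B i * fps_nth (inverse B) (n - i)) = 0" by (simp add: fps_mult_nth)
  moreover have "(\<Sum>i=0..n. fps_nth B i * fps_nth (inverse B) (n - i)) = fps_nth (inverse B) n - (\<Sum>m=1..n. g m * fps_nth (inverse B) (n-m))"
  proof -
    have "(\<Sum>i=0..n. fps_nth B i * fps_nth (inverse B) (n - i)) = fps_nth B 0 * fps_nth (inverse B) (n-0) + (\<Sum>i=1..n. fps_nth B i * fps_nth (inverse B) (n - i))"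
      by (simp add: sum.atLeast_Suc_atMost)
    also have "(\<Sum>i=1..n. fps_nth B i * fps_nth (inverse B) (n - i)) = (\<Sum>i=1..n. - (g i * fps_nth (inverse B) (n - i)))"
      by (rule sum.cong) (auto simp: B_def)
    finally show ?thesis by (simp add: B0 sum_negf)
  qed
  ultimately show ?thesis unfolding q_seq_def B_def[symmetric] by simp
qed



fun Mx :: "nat \<Rightarrow> nat" where
  "Mx 0 = 1" | "Mx (Suc 0) = 1" | "Mx (Suc (Suc 0)) = 2" | "Mx (Suc (Suc (Suc 0))) = 3"
| "Mx (Suc (Suc (Suc (Suc 0)))) = 4"
| "Mx (Suc (Suc (Suc (Suc (Suc n))))) = 3 * Mx (Suc (Suc n))"

lemma Mx3: "a \<ge> 2 \<Longrightarrow> Mx (a+3) = 3 * Mx a"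
proof -
  assume "a \<ge> 2" then obtain b where "a = Suc (Suc b)" by (metis add_2_eq_Suc le_Suc_ex)
  thus ?thesis by (simp add: numeral_eq_Suc)
qed

lemma Mx_pos: "Mx n > 0"
  by (induction n rule: Mx.induct) auto

lemma Mx_ind:
  fixes a :: nat and P :: "nat \<Rightarrow> bool"
  assumes "\<And>a. a < 5 \<Longrightarrow> P a" "\<And>b. b \<ge> 2 \<Longrightarrow> P b \<Longrightarrow> P (b+3)"
  shows "P a"
proof (induction a rule: less_induct)
  case (less a)
  show ?case
  proof (cases "a < 5")
    case True thus ?thesis by (rule assms(1))
  next
    case False
    define b where "b = a - 3"
    have b: "a = b + 3" "b \<ge> 2" using False by (auto simp: b_def)
    thus ?thesis using assms(2) less by auto
  qed
qed

lemma Mx_small: "Mx 5 = 6" "Mx 6 = 9" "Mx 7 = 12" "Mx 8 = 18" "Mx 0 = 1" "Mx 1 = 1" "Mx 2 = 2" "Mx 3 = 3" "Mx 4 = 4"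
  by (simp_all add: numeral_eq_Suc)

declare Mx.simps[simp del]

lemma grow1: "Mx a \<le> Mx (a+1)"
proof (induction a rule: Mx_ind)
  case (1 a) hence "a = 0 \<or> a = 1 \<or> a = 2 \<or> a = 3 \<or> a = 4" by auto
  thus ?case by (auto simp: Mx_small Mx.simps)
next
  case (2 b) thus ?case using Mx3[of b] Mx3[of "b+1"] by (simp add: add.commute add.left_commute)
qed

lemma grow2: "2 * Mx a \<le> Mx (a+2)"
proof (induction a rule: Mx_ind)
  case (1 a) hence "a = 0 \<or> a = 1 \<or> a = 2 \<or> a = 3 \<or> a = 4" by auto
  thus ?case by (auto simp: Mx_small Mx.simps)
next
  case (2 b) thus ?case using Mx3[of b] Mx3[of "b+2"] by (simp add: add.commute add.left_commute)
qed

lemma grow3: "3 * Mx a \<le> Mx (a+3)"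
proof (induction a rule: Mx_ind)
  case (1 a) hence "a = 0 \<or> a = 1 \<or> a = 2 \<or> a = 3 \<or> a = 4" by auto
  thus ?case by (auto simp: Mx_small Mx.simps)
next
  case (2 b) thus ?case using Mx3[of b] Mx3[of "b+3"] by (simp add: add.commute add.left_commute)
qed

definition opt :: "nat \<Rightarrow> nat \<Rightarrow> bool" where
  "opt m a = ((m=1 \<and> a=0) \<or> (m=2 \<and> a mod 3 \<noteq> 1) \<or> (m=3 \<and> (a mod 3 \<noteq> 1 \<or> a \<ge> 4)) \<or> (m=4 \<and> a mod 3 = 0))"

lemma gap_small:
  assumes "m \<in> {1,2,3,4}"
  shows "9*m*Mx a \<le> 8*Mx(a+m) \<or> (m*Mx a = Mx(a+m) \<and> opt m a)"
proof (induction a rule: Mx_ind)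
  case (1 a) hence "a = 0 \<or> a = 1 \<or> a = 2 \<or> a = 3 \<or> a = 4" by auto
  thus ?case using assms by (auto simp: Mx_small Mx.simps opt_def)
next
  case (2 b)
  have e0: "Mx ((b+m)+3) = 3 * Mx (b+m)" using 2 by (intro Mx3) simp
  have "b+3+m = (b+m)+3" by simp
  hence e: "Mx (b+3+m) = 3 * Mx (b+m)" using e0 by metis
  have o: "opt m b \<Longrightarrow> opt m (b+3)" using 2 by (auto simp: opt_def)
  show ?case using 2 e o Mx3[of b] by auto
qed

lemma gap_big:
  assumes "m \<ge> 5"
  shows "9*m*Mx a \<le> 8*Mx(a+m)"
  using assms
proof (induction m rule: less_induct)
  case (less m)
  show ?case
  proof (cases "m \<le> 7")
    case True
    hence "m = 5 \<or> m = 6 \<or> m = 7" using less by auto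
    moreover have "Mx (a+5) \<ge> 6 * Mx a" using grow2[of a] grow3[of "a+2"] by (simp only: add.assoc numeral_plus_numeral semiring_norm; linarith)
    moreover have "Mx (a+6) \<ge> 9 * Mx a" using grow3[of a] grow3[of "a+3"] by (simp only: add.assoc numeral_plus_numeral semiring_norm; linarith)
    moreover have "Mx (a+7) \<ge> 12 * Mx a" using grow2[of a] grow2[of "a+2"] grow3[of "a+4"] by (simp only: add.assoc numeral_plus_numeral semiring_norm; linarith)
    ultimately show ?thesis by auto
  next
    case False
    have ih: "9*((m-3)*Mx a) \<le> 8*Mx(a+(m-3))" using less.IH[of "m-3"] False by (simp add: mult.assoc)
    have "a+(m-3)+3 = a+m" using False by simp
    hence g: "3 * Mx (a+(m-3)) \<le> Mx (a+m)" using grow3[of "a+(m-3)"] by metis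
    have f: "5*Mx a \<le> (m-3)*Mx a" using False by (intro mult_right_mono) auto
    have "m*Mx a = (m-3)*Mx a + 3*Mx a" using False by (simp add: algebra_simps)
    hence "9*m*Mx a = 9*((m-3)*Mx a) + 27*Mx a" by simp
    thus ?thesis using ih g f by linarith
  qed
qed

lemma gap:
  assumes "m \<ge> 1"
  shows "9*m*Mx a \<le> 8*Mx(a+m) \<or> (m*Mx a = Mx(a+m) \<and> opt m a)"
proof (cases "m \<le> 4")
  case True hence "m \<in> {1,2,3,4}" using assms by auto
  thus ?thesis by (rule gap_small)
next
  case False thus ?thesis using gap_big[of m a] by auto
qed

lemma gap_le: "m*Mx a \<le> Mx(a+m)"
  using gap[of m a] by (cases "m = 0") auto

lemma gap_eq: "m \<ge> 1 \<Longrightarrow> m*Mx a = Mx(a+m) \<Longrightarrow> opt m a"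
proof -
  assume a: "m \<ge> 1" "m*Mx a = Mx(a+m)"
  have "8*Mx(a+m) = 8*(m*Mx a)" using a by simp
  moreover have "8*(m*Mx a) < 9*(m*Mx a)" using a Mx_pos[of a] Mx_pos[of "a+m"] by simp
  ultimately have "\<not> 9*m*Mx a \<le> 8*Mx(a+m)" by linarith
  thus ?thesis using gap[OF a(1), of a] by auto
qed

lemma gap2:
  assumes "m \<ge> 2"
  shows "9*(m-1)*Mx a \<le> 8*Mx(a+m)"
proof (cases "m \<ge> 5")
  case True
  have "9*(m-1)*Mx a \<le> 9*m*Mx a" by simp
  thus ?thesis using gap_big[OF True, of a] by linarith
next
  case False
  hence "m = 2 \<or> m = 3 \<or> m = 4" using assms by auto
  moreover have "Mx (a+4) \<ge> 4 * Mx a" using grow2[of a] grow2[of "a+2"] by (simp only: add.assoc numeral_plus_numeral semiring_norm; linarith)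
  ultimately show ?thesis using grow2[of a] grow3[of a] by auto
qed



lemma Mx_c0: "Mx (3*k) = 3^k"
proof (induction k)
  case 0 thus ?case by (simp add: Mx_small)
next
  case (Suc k) show ?case
  proof (cases "k = 0")
    case True thus ?thesis by (simp add: Mx_small)
  next
    case False
    have "Mx (3*Suc k) = Mx (3*k+3)" by (simp add: add.commute)
    also have "\<dots> = 3 * Mx (3*k)" by (rule Mx3) (use False in simp)
    finally show ?thesis using Suc by simp
  qed
qed

lemma Mx_c2: "Mx (3*k+2) = 2*3^k"
proof (induction k)
  case 0 thus ?case by (simp add: Mx.simps)
next
  case (Suc k)
  have "Mx (3*Suc k + 2) = Mx ((3*k+2)+3)" by (simp add: algebra_simps)
  also have "\<dots> = 3 * Mx (3*k+2)" by (rule Mx3) simp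
  finally show ?case using Suc by simp
qed

lemma Mx_c1: "Mx (3*k+4) = 4*3^k"
proof (induction k)
  case 0 thus ?case by (simp add: Mx_small)
next
  case (Suc k)
  have "Mx (3*Suc k + 4) = Mx ((3*k+4)+3)" by (simp add: algebra_simps)
  also have "\<dots> = 3 * Mx (3*k+4)" by (rule Mx3) simp
  finally show ?case using Suc by simp
qed

definition A :: "nat \<Rightarrow> real" where
  "A n = (if n mod 3 = 0 then 1 else if n mod 3 = 2 then real (n div 3) + 1
          else if n = 1 then 1 else real (n div 3) * (real (n div 3) + 3) / 2)"

lemma A_c0: "A (3*k) = 1" by (simp add: A_def)
lemma A_c2: "A (3*k+2) = real k + 1"
proof -
  have "(3*k+2) mod 3 = 2" "(3*k+2) div 3 = k" by presburger+
  thus ?thesis unfolding A_def by simp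
qed
lemma A_c1: "A (3*k+4) = (real k + 1) * (real k + 4) / 2"
proof -
  have "(3*k+4) mod 3 = 1" "(3*k+4) div 3 = k+1" by presburger+
  thus ?thesis unfolding A_def by (simp add: algebra_simps)
qed

lemma sum14: "(\<Sum>m=(1::nat)..4. f m) = f 1 + f 2 + f 3 + f 4"
proof -
  have "{(1::nat)..4} = {1,2,3,4}" by auto
  thus ?thesis by (simp add: add.assoc)
qed
lemma sum13: "(\<Sum>m=(1::nat)..3. f m) = f 1 + f 2 + f 3"
proof -
  have "{(1::nat)..3} = {1,2,3}" by auto
  thus ?thesis by (simp add: add.assoc)
qed
lemma sum12: "(\<Sum>m=(1::nat)..2. f m) = f 1 + f 2"
proof -
  have "{(1::nat)..2} = {1,2}" by auto
  thus ?thesis by simp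
qed

lemma Asum:
  assumes "n \<ge> 1"
  shows "(\<Sum>m=1..n. if opt m (n-m) then A (n-m) else 0) \<le> A n"
proof (cases "n \<le> 4")
  case True
  hence "n = 1 \<or> n = 2 \<or> n = 3 \<or> n = 4" using assms by auto
  moreover
  have "opt 2 1 = False" "opt 1 1 = False" "opt 3 1 = False" "opt 1 2 = False" "opt 1 3 = False"
    "opt 2 0 = True" "opt 1 0 = True" "opt 3 0 = True" "opt 4 0 = True" "opt 2 2 = True"
    by (simp_all add: opt_def)
  moreover have "A 0 = 1" "A 1 = 1" "A 2 = 1" "A 3 = 1" "A 4 = 2" by (simp_all add: A_def)
  ultimately show ?thesis
  proof (elim disjE)
    assume "n = 4"
    have "(\<Sum>m=1..n. if opt m (n-m) then A (n-m) else 0) = (if opt 1 3 then A 3 else 0) + (if opt 2 2 then A 2 else 0) + (if opt 3 1 then A 1 else 0) + (if opt 4 0 then A 0 else 0)"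
      unfolding \<open>n=4\<close> by (simp only: sum14) simp
    thus ?thesis using \<open>n=4\<close> \<open>A 4 = 2\<close> by (simp add: opt_def A_def)
  next
    assume "n = 3"
    have "(\<Sum>m=1..n. if opt m (n-m) then A (n-m) else 0) = (if opt 1 2 then A 2 else 0) + (if opt 2 1 then A 1 else 0) + (if opt 3 0 then A 0 else 0)"
      unfolding \<open>n=3\<close> by (simp only: sum13) simp
    thus ?thesis using \<open>n=3\<close> by (simp add: opt_def A_def)
  next
    assume "n = 2"
    have "(\<Sum>m=1..n. if opt m (n-m) then A (n-m) else 0) = (if opt 1 1 then A 1 else 0) + (if opt 2 0 then A 0 else 0)"
      unfolding \<open>n=2\<close> by (simp only: sum12) simp
    thus ?thesis using \<open>n=2\<close> by (simp add: opt_def A_def)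
  next
    assume "n = 1"
    thus ?thesis by (simp add: opt_def A_def)
  qed
next
  case False
  let ?f = "\<lambda>m. if opt m (n-m) then A (n-m) else 0"
  have "(\<Sum>m=1..n. ?f m) = (\<Sum>m=1..4. ?f m)"
  proof (rule sum.mono_neutral_right)
    show "\<forall>i\<in>{1..n} - {1..4}. ?f i = 0" by (auto simp: opt_def)
  qed (use False in auto)
  also have "\<dots> = ?f 1 + ?f 2 + ?f 3 + ?f 4" by (rule sum14)
  also have "\<dots> \<le> A n"
  proof -
    define k where "k = (n-5) div 3"
    define s where "s = (n-5) mod 3"
    have ks: "n = 3*k + s + 5" "s < 3" using False unfolding k_def s_def by auto
    have "s = 0 \<or> s = 1 \<or> s = 2" using ks by auto
    moreover
    { assume "s = 0"
      hence n: "n = 3*k+5" using ks by simp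
      have f1: "?f 1 = 0" using n by (simp add: opt_def)
      have f2: "?f 2 = 1" using n A_c0[of "k+1"] by (simp add: opt_def)
      have "n - 3 = 3*k+2" using n by simp
      hence f3: "?f 3 = real k + 1" using A_c2[of k] by (simp add: opt_def mod_Suc)
      have "n - 4 = 3*k+1" using n by simp
      hence f4: "?f 4 = 0" by (simp add: opt_def)
      have "n = 3*(k+1)+2" using n by simp
      hence "A n = real k + 2" using A_c2[of "k+1"] by simp
      hence ?thesis using f1 f2 f3 f4 by simp }
    moreover
    { assume "s = 1"
      hence n: "n = 3*k+6" using ks by simp
      have f1: "?f 1 = 0" using n by (simp add: opt_def)
      have "n - 2 = 3*k+4" using n by simp
      hence f2: "?f 2 = 0" by (simp add: opt_def)
      have "n - 3 = 3*(k+1)" using n by simp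
      hence f3: "?f 3 = 1" using A_c0[of "k+1"] by (simp add: opt_def)
      have "n - 4 = 3*k+2" using n by simp
      hence f4: "?f 4 = 0" by (simp add: opt_def mod_Suc)
      have "n = 3*(k+2)" using n by simp
      hence "A n = 1" using A_c0[of "k+2"] by simp
      hence ?thesis using f1 f2 f3 f4 by simp }
    moreover
    { assume "s = 2"
      hence n: "n = 3*k+7" using ks by simp
      have f1: "?f 1 = 0" using n by (simp add: opt_def)
      have "n - 2 = 3*(k+1)+2" using n by simp
      hence f2: "?f 2 = real k + 2" using A_c2[of "k+1"] by (simp add: opt_def mod_Suc)
      have "n - 3 = 3*k+4" using n by simp
      hence f3: "?f 3 = (real k + 1) * (real k + 4) / 2" using A_c1[of k] by (simp add: opt_def)
      have "n - 4 = 3*(k+1)" using n by simp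
      hence f4: "?f 4 = 1" using A_c0[of "k+1"] by (simp add: opt_def)
      have "n = 3*(k+1)+4" using n by simp
      hence "A n = (real k + 2) * (real k + 5) / 2" using A_c1[of "k+1"] by (simp add: algebra_simps)
      hence ?thesis using f1 f2 f3 f4 by (simp add: field_simps) }
    ultimately show ?thesis by blast
  qed
  finally show ?thesis .
qed



lemma q_nonneg:
  assumes "\<And>m. m \<ge> 1 \<Longrightarrow> g m \<ge> 0"
  shows "q_seq g n \<ge> 0"
proof (induction n rule: less_induct)
  case (less n)
  show ?case
  proof (cases "n = 0")
    case True thus ?thesis by (simp add: q_zero)
  next
    case False
    hence "q_seq g n = (\<Sum>m=1..n. g m * q_seq g (n-m))" by (intro q_rec) simp
    also have "\<dots> \<ge> 0" using less assms False by (intro sum_nonneg mult_nonneg_nonneg) auto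
    finally show ?thesis .
  qed
qed

lemma q_ge_sub:
  assumes "\<And>m. m \<ge> 1 \<Longrightarrow> g m \<ge> 0" "S \<subseteq> {1..n}" "n \<ge> 1"
  shows "(\<Sum>m\<in>S. g m * q_seq g (n-m)) \<le> q_seq g n"
proof -
  have "(\<Sum>m\<in>S. g m * q_seq g (n-m)) \<le> (\<Sum>m=1..n. g m * q_seq g (n-m))"
    using assms q_nonneg[of g] by (intro sum_mono2) auto
  thus ?thesis using q_rec[OF assms(3)] by simp
qed

lemma D_conv:
  assumes "x > 0" "real d > log (9/8) x"
  shows "(8/9::real)^d * x < 1"
proof -
  have "x < (9/8) powr real d" using assms by (subst (asm) log_less_iff) auto
  hence "x < (9/8)^d" by (simp add: powr_realpow)
  hence "(8/9::real)^d * x < (8/9)^d * (9/8)^d" by (intro mult_strict_left_mono) auto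
  also have "\<dots> = 1" by (simp add: power_mult_distrib[symmetric])
  finally show ?thesis .
qed

context
  fixes g :: "nat \<Rightarrow> nat \<Rightarrow> real" and d :: nat
  assumes pos: "\<And>d m. m \<ge> 1 \<Longrightarrow> g d m > 0"
    and one: "\<And>d. g d 1 = 1"
    and lower: "\<And>d m. m \<ge> 1 \<Longrightarrow> 0 \<le> g d m - real m ^ d"
    and upper: "\<And>d m. m \<ge> 1 \<Longrightarrow> g d m - real m ^ d \<le> (g 0 m - 1) * (real m - 1) ^ d"
begin

lemma g0_ge1: "m \<ge> 1 \<Longrightarrow> g 0 m \<ge> 1"
  using lower[of m 0] by simp

lemma gnn: "m \<ge> 1 \<Longrightarrow> g e m \<ge> 0"
  using pos[of m e] by simp

lemma Qnn: "q_seq (g e) n \<ge> 0"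
  by (rule q_nonneg) (rule gnn)

lemma g_up: "m \<ge> 1 \<Longrightarrow> g d m \<le> g 0 m * real m ^ d"
proof -
  assume m: "m \<ge> 1"
  have "(real m - 1)^d \<le> real m ^ d" using m by (intro power_mono) auto
  hence "(g 0 m - 1) * (real m - 1) ^ d \<le> (g 0 m - 1) * real m ^ d"
    using g0_ge1[OF m] by (intro mult_left_mono) auto
  thus ?thesis using upper[OF m, of d] by (simp add: algebra_simps)
qed

lemma upper1: "q_seq (g d) n \<le> real (Mx n) ^ d * q_seq (g 0) n"
proof (induction n rule: less_induct)
  case (less n)
  show ?case
  proof (cases "n = 0")
    case True thus ?thesis by (simp add: q_zero Mx_small)
  next
    case False
    hence n1: "n \<ge> 1" by simp
    have "q_seq (g d) n = (\<Sum>m=1..n. g d m * q_seq (g d) (n-m))" by (rule q_rec[OF n1])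
    also have "\<dots> \<le> (\<Sum>m=1..n. real (Mx n) ^ d * (g 0 m * q_seq (g 0) (n-m)))"
    proof (rule sum_mono)
      fix m assume m: "m \<in> {1..n}"
      have "g d m * q_seq (g d) (n-m) \<le> (g 0 m * real m ^ d) * (real (Mx (n-m)) ^ d * q_seq (g 0) (n-m))"
        using m less.IH[of "n-m"] g_up[of m] Qnn[of d "n-m"] g0_ge1[of m] by (intro mult_mono) auto
      also have "\<dots> = g 0 m * q_seq (g 0) (n-m) * (real m * real (Mx (n-m))) ^ d"
        by (simp add: power_mult_distrib algebra_simps)
      also have "\<dots> \<le> g 0 m * q_seq (g 0) (n-m) * real (Mx n) ^ d"
      proof (rule mult_left_mono)
        have "m * Mx (n-m) \<le> Mx (n-m+m)" by (rule gap_le)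
        hence "real m * real (Mx (n-m)) \<le> real (Mx n)" using m by (simp flip: of_nat_mult)
        thus "(real m * real (Mx (n-m))) ^ d \<le> real (Mx n) ^ d" by (intro power_mono) auto
        show "0 \<le> g 0 m * q_seq (g 0) (n-m)" using m g0_ge1[of m] Qnn[of 0 "n-m"] by auto
      qed
      finally show "g d m * q_seq (g d) (n-m) \<le> real (Mx n) ^ d * (g 0 m * q_seq (g 0) (n-m))"
        by (simp add: algebra_simps)
    qed
    also have "\<dots> = real (Mx n) ^ d * q_seq (g 0) n"
      by (simp add: sum_distrib_left[symmetric] q_rec[OF n1])
    finally show ?thesis .
  qed
qed

lemma A_nn: "A n \<ge> 0"
  by (simp add: A_def)

lemma pow89: "real a \<le> (8/9) * real b \<Longrightarrow> real a ^ d \<le> (8/9)^d * real b ^ d"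
  by (metis of_nat_0_le_iff power_mono power_mult_distrib)

lemma upper2: "q_seq (g d) n \<le> real (Mx n) ^ d * (A n + (8/9)^d * q_seq (g 0) n)"
proof (induction n rule: less_induct)
  case (less n)
  define \<epsilon> :: real where "\<epsilon> = (8/9)^d"
  have \<epsilon>0: "\<epsilon> \<ge> 0" by (simp add: \<epsilon>_def)
  show ?case
  proof (cases "n = 0")
    case True thus ?thesis by (simp add: q_zero Mx_small A_def)
  next
    case False
    hence n1: "n \<ge> 1" by simp
    let ?M = "real (Mx n)"
    have "q_seq (g d) n = (\<Sum>m=1..n. g d m * q_seq (g d) (n-m))" by (rule q_rec[OF n1])
    also have "\<dots> \<le> (\<Sum>m=1..n. ?M ^ d * ((if opt m (n-m) then A (n-m) else 0) + \<epsilon> * (g 0 m * q_seq (g 0) (n-m))))"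
    proof (rule sum_mono)
      fix m assume m: "m \<in> {1..n}"
      let ?M' = "real (Mx (n-m))"
      let ?Q = "q_seq (g d) (n-m)"
      let ?P = "q_seq (g 0) (n-m)"
      have nm: "n - m + m = n" using m by simp
      have Q0nn: "?P \<ge> 0" by (rule Qnn)
      have Qnn': "?Q \<ge> 0" by (rule Qnn)
      have g0m: "g 0 m \<ge> 1" using m g0_ge1 by auto
      show "g d m * ?Q \<le> ?M ^ d * ((if opt m (n-m) then A (n-m) else 0) + \<epsilon> * (g 0 m * ?P))"
      proof (cases "m * Mx (n-m) = Mx n")
        case True
        have op: "opt m (n-m)" using gap_eq[of m "n-m"] True m nm by auto
        have eqM: "real m ^ d * ?M' ^ d = ?M ^ d"
          using True by (metis of_nat_mult power_mult_distrib)
        have gs: "g d m \<le> real m ^ d + (g 0 m - 1) * (real m - 1) ^ d" using upper[of m d] m by simp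
        have h1: "real m ^ d * ?Q \<le> ?M ^ d * (A (n-m) + \<epsilon> * ?P)"
        proof -
          have "real m ^ d * ?Q \<le> real m ^ d * (?M' ^ d * (A (n-m) + \<epsilon> * ?P))"
            unfolding \<epsilon>_def by (rule mult_left_mono[OF less.IH[of "n-m"]]) (use m in auto)
          thus ?thesis using eqM by (simp add: mult.assoc[symmetric])
        qed
        have h2: "(g 0 m - 1) * (real m - 1) ^ d * ?Q \<le> \<epsilon> * ((g 0 m - 1) * ?P) * ?M ^ d"
        proof (cases "m = 1")
          case True thus ?thesis using one[of 0] by simp
        next
          case False
          hence m2: "m \<ge> 2" using m by auto
          have "9*(m-1)*Mx (n-m) \<le> 8*Mx (n-m+m)" by (rule gap2[OF m2])
          hence "9*((m-1)*Mx (n-m)) \<le> 8*Mx n" using nm by (simp add: mult.assoc)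
          hence "real (9*((m-1)*Mx (n-m))) \<le> real (8*Mx n)" by (rule of_nat_mono)
          hence "9 * real ((m-1)*Mx (n-m)) \<le> 8 * ?M" by (simp only: of_nat_mult of_nat_numeral)
          hence "real ((m-1) * Mx (n-m)) \<le> (8/9) * ?M" by simp
          hence p: "real ((m-1) * Mx (n-m)) ^ d \<le> \<epsilon> * ?M ^ d" unfolding \<epsilon>_def by (rule pow89)
          have "(real m - 1) ^ d * ?Q \<le> (real m - 1) ^ d * (?M' ^ d * ?P)"
            using upper1[of "n-m"] m by (intro mult_left_mono) auto
          also have "\<dots> = real ((m-1) * Mx (n-m)) ^ d * ?P" using m2
            by (simp add: of_nat_diff power_mult_distrib)
          also have "\<dots> \<le> \<epsilon> * ?M ^ d * ?P" using p Q0nn by (intro mult_right_mono) auto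
          finally have "(real m - 1) ^ d * ?Q \<le> \<epsilon> * ?M ^ d * ?P" .
          hence "(g 0 m - 1) * ((real m - 1) ^ d * ?Q) \<le> (g 0 m - 1) * (\<epsilon> * ?M ^ d * ?P)"
            using g0m by (intro mult_left_mono) auto
          thus ?thesis by (simp add: algebra_simps)
        qed
        have "g d m * ?Q \<le> (real m ^ d + (g 0 m - 1) * (real m - 1) ^ d) * ?Q"
          using gs Qnn' by (intro mult_right_mono) auto
        also have "\<dots> = real m ^ d * ?Q + (g 0 m - 1) * (real m - 1) ^ d * ?Q" by (simp add: algebra_simps)
        also have "\<dots> \<le> ?M ^ d * (A (n-m) + \<epsilon> * ?P) + \<epsilon> * ((g 0 m - 1) * ?P) * ?M ^ d"
          using h1 h2 by linarith
        also have "\<dots> = ?M ^ d * ((if opt m (n-m) then A (n-m) else 0) + \<epsilon> * (g 0 m * ?P))"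
          using op by (simp add: algebra_simps)
        finally show ?thesis .
      next
        case False
        have "9*m*Mx (n-m) \<le> 8*Mx (n-m+m)" using gap[of m "n-m"] m False nm by auto
        hence "9*(m*Mx (n-m)) \<le> 8*Mx n" using nm by (simp add: mult.assoc)
        hence "real (9*(m*Mx (n-m))) \<le> real (8*Mx n)" by (rule of_nat_mono)
        hence "9 * real (m*Mx (n-m)) \<le> 8 * ?M" by (simp only: of_nat_mult of_nat_numeral)
        hence "real (m * Mx (n-m)) \<le> (8/9) * ?M" by simp
        hence p: "real (m * Mx (n-m)) ^ d \<le> \<epsilon> * ?M ^ d" unfolding \<epsilon>_def by (rule pow89)
        have "g d m * ?Q \<le> (g 0 m * real m ^ d) * (?M' ^ d * ?P)"
          using m upper1[of "n-m"] g_up[of m] Qnn' g0m by (intro mult_mono) auto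
        also have "\<dots> = g 0 m * ?P * real (m * Mx (n-m)) ^ d" by (simp add: power_mult_distrib)
        also have "\<dots> \<le> g 0 m * ?P * (\<epsilon> * ?M ^ d)" using p g0m Q0nn by (intro mult_left_mono) auto
        also have "\<dots> \<le> ?M ^ d * ((if opt m (n-m) then A (n-m) else 0) + \<epsilon> * (g 0 m * ?P))"
          using A_nn[of "n-m"] by (simp add: algebra_simps)
        finally show ?thesis .
      qed
    qed
    also have "\<dots> = ?M ^ d * ((\<Sum>m=1..n. (if opt m (n-m) then A (n-m) else 0)) + \<epsilon> * q_seq (g 0) n)"
      by (simp add: sum_distrib_left[symmetric] sum.distrib q_rec[OF n1])
    also have "\<dots> \<le> ?M ^ d * (A n + \<epsilon> * q_seq (g 0) n)"
      using Asum[OF n1] by (intro mult_left_mono) auto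
    finally show ?thesis unfolding \<epsilon>_def .
  qed
qed

lemma gd_ge: "m \<ge> 1 \<Longrightarrow> g e m \<ge> real m ^ e"
  using lower[of m e] by simp

lemma lower0: "q_seq (g d) (3*k) \<ge> ((3::real)^k)^d"
proof (induction k)
  case 0 thus ?case by (simp add: q_zero)
next
  case (Suc k)
  have "g d 3 * q_seq (g d) (3*Suc k - 3) \<le> q_seq (g d) (3*Suc k)"
    using q_ge_sub[of "g d" "{3}" "3*Suc k"] gnn by auto
  moreover have "((3::real)^Suc k)^d = 3^d * (3^k)^d" by (simp add: power_mult_distrib)
  moreover have "(3::real)^d * (3^k)^d \<le> g d 3 * q_seq (g d) (3*k)"
    using Suc gd_ge[of 3 d] gnn[of 3 d] by (intro mult_mono) auto
  ultimately show ?case by simp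
qed

lemma lower2: "q_seq (g d) (3*k+2) \<ge> (real k + 1) * ((2::real)*3^k)^d"
proof (induction k)
  case 0
  have "g d 2 * q_seq (g d) (2 - 2) \<le> q_seq (g d) 2"
    using q_ge_sub[of "g d" "{2}" 2] gnn by auto
  hence "(2::real)^d \<le> q_seq (g d) 2" using gd_ge[of 2 d] by (simp add: q_zero)
  moreover have "3*(0::nat)+2 = 2" by simp
  ultimately show ?case by (metis mult_1 of_nat_0 power_0 mult_1_right add_0)
next
  case (Suc k)
  let ?n = "3*Suc k + 2"
  have "(\<Sum>m\<in>{2,3}. g d m * q_seq (g d) (?n-m)) \<le> q_seq (g d) ?n"
    using gnn by (intro q_ge_sub) auto
  hence "g d 2 * q_seq (g d) (3*Suc k) + g d 3 * q_seq (g d) (3*k+2) \<le> q_seq (g d) ?n"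
    by (simp add: numeral_eq_Suc)
  moreover have "(2::real)^d * ((3::real)^Suc k)^d \<le> g d 2 * q_seq (g d) (3*Suc k)"
    using lower0[of "Suc k"] gd_ge[of 2 d] gnn[of 2 d] by (intro mult_mono) auto
  moreover have "(3::real)^d * ((real k + 1) * ((2::real)*3^k)^d) \<le> g d 3 * q_seq (g d) (3*k+2)"
    using Suc gd_ge[of 3 d] gnn[of 3 d] by (intro mult_mono) auto
  moreover have "(2::real)^d * ((3::real)^Suc k)^d + (3::real)^d * ((real k + 1) * ((2::real)*3^k)^d)
      = (real (Suc k) + 1) * ((2::real)*3^Suc k)^d"
  proof -
    have six: "(6::real)^d = 2^d * 3^d" by (simp flip: power_mult_distrib)
    show ?thesis by (simp add: power_mult_distrib algebra_simps six)
  qed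
  ultimately show ?case by linarith
qed

lemma Qpos: "n \<ge> 1 \<Longrightarrow> q_seq (g e) n > 0"
proof -
  assume n: "n \<ge> 1"
  have "g e n * q_seq (g e) (n - n) \<le> q_seq (g e) n"
    using q_ge_sub[of "g e" "{n}" n] gnn n by auto
  thus ?thesis using pos[OF n, of e] by (simp add: q_zero)
qed

end


lemma ratio_ge: "y > 0 \<Longrightarrow> y \<le> x \<Longrightarrow> \<not> (x / y < (1::real))"
  by (simp add: divide_less_eq)
lemma ratio_lt: "y > 0 \<Longrightarrow> x < y \<Longrightarrow> x / y < (1::real)"
  by (simp add: divide_less_eq)

lemma sq_aux: "((x::real)^d * y^n)^2 = (x*x)^d * y^(2*n)"
proof -
  have "y^(2*n) = y^n * y^n" by (simp add: mult_2 power_add)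
  thus ?thesis by (simp add: power2_eq_square power_mult_distrib mult_ac)
qed

lemma sq_aux2: "(y*y)^d * (a::real)^2 = (a * y^d)^2"
  by (simp add: power2_eq_square power_mult_distrib mult_ac)

theorem theorem1:
  fixes g :: "nat \<Rightarrow> nat \<Rightarrow> real" and r :: real and n d :: nat
  assumes pos: "\<And>d m. m \<ge> 1 \<Longrightarrow> g d m > 0"
    and one: "\<And>d. g d 1 = 1"
    and lower: "\<And>d m. m \<ge> 1 \<Longrightarrow> 0 \<le> g d m - real m ^ d"
    and upper: "\<And>d m. m \<ge> 1 \<Longrightarrow> g d m - real m ^ d \<le> (g 0 m - 1) * (real m - 1) ^ d"
    and r: "0 < r" "r \<le> 1"
    and qbound: "\<And>m. m \<ge> 1 \<Longrightarrow> q_seq (g 0) m \<le> r powi (- int m)"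
    and n: "n \<ge> 3"
    and d: "real d > D_g (g 0) r n"
  shows "(q_seq (g d) n)\<^sup>2 / (q_seq (g d) (n - 1) * q_seq (g d) (n + 1)) < 1 \<longleftrightarrow> n mod 3 = 1"
proof -
  note U1 = upper1[OF pos one lower upper]
  note U2 = upper2[OF pos one lower upper]
  note L0 = lower0[OF pos one lower upper]
  note L2 = lower2[OF pos one lower upper]
  note QP = Qpos[OF pos one lower upper]
  note QN = Qnn[OF pos one lower upper]
  define \<epsilon> :: real where "\<epsilon> = (8/9)^d"
  define R where "R = 1/r"
  have R1: "R \<ge> 1" using r by (simp add: R_def)
  have rinv: "\<And>m. m \<ge> 1 \<Longrightarrow> q_seq (g 0) m \<le> R^m"
    using qbound r by (simp add: R_def power_int_minus power_one_over divide_inverse power_inverse)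
  have logR: "\<And>k. log (9/8) (R^k) = - real k * log (9/8) r"
    using r by (simp add: R_def log_nat_power log_recip)
  have den: "q_seq (g d) (n - 1) * q_seq (g d) (n + 1) > 0" using n QP by simp
  have \<epsilon>0: "\<epsilon> > 0" by (simp add: \<epsilon>_def)
  consider "n mod 3 = 0" | "n mod 3 = 1" | "n mod 3 = 2" by arith
  thus ?thesis
  proof cases
    case 1
    define j where "j = n div 3 - 1"
    have nj: "n = 3*j+3" using 1 n unfolding j_def by arith
    have "D_g (g 0) r n = log (9/8) (R^(2*n))" using 1 logR[of "2*n"] unfolding D_g_def by simp
    hence eR: "\<epsilon> * R^(2*n) < 1" unfolding \<epsilon>_def using R1 d by (intro D_conv) auto
    have a: "q_seq (g d) (n-1) \<le> ((2::real)*3^j)^d * R^(n-1)"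
    proof -
      have "q_seq (g d) (n-1) \<le> real (Mx (n-1))^d * q_seq (g 0) (n-1)" by (rule U1)
      also have "real (Mx (n-1)) = 2*3^j" using nj Mx_c2[of j] by simp
      also have "q_seq (g 0) (n-1) \<le> R^(n-1)" using n by (intro rinv) simp
      finally show ?thesis by (simp add: mult_left_mono)
    qed
    have b: "q_seq (g d) (n+1) \<le> ((4::real)*3^j)^d * R^(n+1)"
    proof -
      have n1: "n+1 = 3*j+4" using nj by simp
      have e: "real (Mx (n+1)) = 4*3^j" by (simp only: n1 Mx_c1) simp
      have "q_seq (g d) (n+1) \<le> real (Mx (n+1))^d * q_seq (g 0) (n+1)" by (rule U1)
      also have "real (Mx (n+1)) = 4*3^j" by (rule e)
      also have "q_seq (g 0) (n+1) \<le> R^(n+1)" using n by (intro rinv) simp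
      finally show ?thesis by (simp add: mult_left_mono)
    qed
    define T where "T = (((3::real)^(j+1))^d)^2"
    have c: "T \<le> (q_seq (g d) n)^2"
    proof -
      have "((3::real)^(j+1))^d \<le> q_seq (g d) n" using L0[where d=d and k="j+1"] nj by (simp add: add.commute)
      thus ?thesis unfolding T_def by (intro power_mono) auto
    qed
    have T0: "T > 0" by (simp add: T_def)
    have "q_seq (g d) (n-1) * q_seq (g d) (n+1) \<le> (((2::real)*3^j)^d * R^(n-1)) * (((4::real)*3^j)^d * R^(n+1))"
      using a b QN[where e=d and n="n-1"] QN[where e=d and n="n+1"] by (intro mult_mono) auto
    also have "\<dots> = ((2::real)*3^j*(4*3^j))^d * (R^(n-1) * R^(n+1))" by (simp only: power_mult_distrib mult_ac)
    also have "R^(n-1) * R^(n+1) = R^(2*n)"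
    proof -
      have "n - 1 + (n + 1) = 2*n" using n by simp
      thus ?thesis by (metis power_add)
    qed
    also have "((2::real)*3^j*(4*3^j))^d = \<epsilon> * T"
    proof -
      have "(2::real)*3^j*(4*3^j) = (8/9) * ((3::real)^(j+1))^2" by (simp add: power2_eq_square algebra_simps power_mult_distrib)
      hence "((2::real)*3^j*(4*3^j))^d = ((8/9) * ((3::real)^(j+1))^2)^d" by (simp only:)
      also have "\<dots> = (8/9)^d * (((3::real)^(j+1))^2)^d" by (rule power_mult_distrib)
      also have "(((3::real)^(j+1))^2)^d = T" unfolding T_def by (metis power_mult mult.commute)
      finally show ?thesis by (simp add: \<epsilon>_def)
    qed
    also have "\<epsilon> * T * R^(2*n) < T" using eR T0 by (simp add: algebra_simps)
    finally have "q_seq (g d) (n-1) * q_seq (g d) (n+1) < (q_seq (g d) n)^2" using c by linarith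
    thus ?thesis using ratio_ge[OF den] 1 by auto
  next
    case 2
    define j where "j = n div 3 - 1"
    have nj: "n = 3*j+4" using 2 n unfolding j_def by arith
    have Rp: "R > 0" using R1 by simp
    have "D_g (g 0) r n = log (9/8) (3 * R^(2*n) / (real n + 2))"
      using 2 logR[of "2*n"] Rp unfolding D_g_def by (simp add: log_divide_pos log_mult_pos)
    hence "\<epsilon> * (3 * R^(2*n) / (real n + 2)) < 1" unfolding \<epsilon>_def using R1 d by (intro D_conv) auto
    hence eR: "\<epsilon> * R^(2*n) < real j + 2" using nj by (simp add: field_simps)
    have a: "q_seq (g d) n \<le> ((4::real)*3^j)^d * R^n"
    proof -
      have e: "real (Mx n) = 4*3^j" by (simp only: nj Mx_c1) simp
      have "q_seq (g d) n \<le> real (Mx n)^d * q_seq (g 0) n" by (rule U1)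
      also have "real (Mx n) = 4*3^j" by (rule e)
      also have "q_seq (g 0) n \<le> R^n" using n by (intro rinv) simp
      finally show ?thesis by (simp add: mult_left_mono)
    qed
    have b: "((3::real)^(j+1))^d \<le> q_seq (g d) (n-1)"
    proof -
      have n1: "n-1 = 3*(j+1)" using nj by simp
      show ?thesis unfolding n1 by (rule L0)
    qed
    have c: "(real j + 2) * ((2::real)*3^(j+1))^d \<le> q_seq (g d) (n+1)"
    proof -
      have n1: "n+1 = 3*(j+1)+2" using nj by simp
      show ?thesis unfolding n1 using L2[where d=d and k="j+1"] by (simp add: add.commute)
    qed
    define P where "P = ((3::real)^(j+1))^d * ((2::real)*3^(j+1))^d"
    have P0: "P > 0" by (simp add: P_def)
    have "(q_seq (g d) n)^2 \<le> (((4::real)*3^j)^d * R^n)^2"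
      using a QN[where e=d and n=n] by (intro power_mono) auto
    also have "\<dots> = ((4::real)*3^j*(4*3^j))^d * R^(2*n)"
      by (rule sq_aux)
    also have "((4::real)*3^j*(4*3^j))^d = \<epsilon> * P"
    proof -
      have "(4::real)*3^j*(4*3^j) = (8/9) * ((3::real)^(j+1) * (2*3^(j+1)))" by (simp add: algebra_simps)
      hence "((4::real)*3^j*(4*3^j))^d = ((8/9) * ((3::real)^(j+1) * (2*3^(j+1))))^d" by (simp only:)
      also have "\<dots> = \<epsilon> * P" unfolding \<epsilon>_def P_def by (simp only: power_mult_distrib)
      finally show ?thesis .
    qed
    also have "\<epsilon> * P * R^(2*n) < (real j + 2) * P"
    proof -
      have "(\<epsilon> * R^(2*n)) * P < (real j + 2) * P" using eR P0 by (intro mult_strict_right_mono)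
      thus ?thesis by (simp add: mult_ac)
    qed
    also have "(real j + 2) * P \<le> q_seq (g d) (n-1) * q_seq (g d) (n+1)"
    proof -
      have "(real j + 2) * P = ((3::real)^(j+1))^d * ((real j + 2) * ((2::real)*3^(j+1))^d)"
        by (simp add: P_def algebra_simps)
      also have "\<dots> \<le> q_seq (g d) (n-1) * q_seq (g d) (n+1)"
        using b c QN[where e=d and n="n-1"] by (intro mult_mono) auto
      finally show ?thesis .
    qed
    finally show ?thesis using ratio_lt[OF den] 2 by auto
  next
    case 3
    define i where "i = n div 3 - 1"
    have ni: "n = 3*i+5" using 3 n unfolding i_def by arith
    have Q0ge1: "\<And>m. m \<ge> 1 \<Longrightarrow> q_seq (g 0) m \<ge> 1"
    proof -
      fix m :: nat assume m: "m \<ge> 1"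
      have "g 0 m * q_seq (g 0) (m - m) \<le> q_seq (g 0) m"
        using q_ge_sub[of "g 0" "{m}" m] pos m by (auto intro: less_imp_le)
      thus "q_seq (g 0) m \<ge> 1" using lower[OF m, of 0] by (simp add: q_zero)
    qed
    have ab: "\<epsilon> * q_seq (g 0) (n-1) \<le> 1/2 \<and> \<epsilon> * q_seq (g 0) (n+1) \<le> 1/2"
    proof (cases "n = 5")
      case True
      have p4: "q_seq (g 0) 4 \<ge> 1" and p6: "q_seq (g 0) 6 \<ge> 1" by (auto intro: Q0ge1)
      have "D_g (g 0) r n = log (9/8) (2 * q_seq (g 0) 4 * q_seq (g 0) 6)"
        using True unfolding D_g_def by simp
      hence e: "\<epsilon> * (2 * q_seq (g 0) 4 * q_seq (g 0) 6) < 1" unfolding \<epsilon>_def using p4 p6 d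
        by (intro D_conv) auto
      have "\<epsilon> * q_seq (g 0) 4 * 1 \<le> \<epsilon> * q_seq (g 0) 4 * q_seq (g 0) 6"
        using p4 p6 \<epsilon>0 by (intro mult_left_mono) auto
      moreover have "\<epsilon> * q_seq (g 0) 6 * 1 \<le> \<epsilon> * q_seq (g 0) 6 * q_seq (g 0) 4"
        using p4 p6 \<epsilon>0 by (intro mult_left_mono) auto
      ultimately show ?thesis using e True by (simp add: mult_ac)
    next
      case False
      have "D_g (g 0) r n = log (9/8) (2 * R^(n+1))"
        using 3 False logR[of "n+1"] R1 unfolding D_g_def by (simp add: log_mult_pos algebra_simps)
      hence e: "\<epsilon> * (2 * R^(n+1)) < 1" unfolding \<epsilon>_def using R1 d by (intro D_conv) auto
      have "q_seq (g 0) (n-1) \<le> R^(n-1)" using n by (intro rinv) simp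
      also have "R^(n-1) \<le> R^(n+1)" using R1 by (intro power_increasing) auto
      finally have "\<epsilon> * q_seq (g 0) (n-1) \<le> \<epsilon> * R^(n+1)" using \<epsilon>0 by simp
      moreover have "\<epsilon> * q_seq (g 0) (n+1) \<le> \<epsilon> * R^(n+1)" using \<epsilon>0 rinv[of "n+1"] by simp
      ultimately show ?thesis using e by simp
    qed
    have a: "q_seq (g d) (n-1) \<le> ((4::real)*3^i)^d * ((real i + 1) * (real i + 4) / 2 + 1/2)"
    proof -
      have n1: "n-1 = 3*i+4" using ni by simp
      have e: "real (Mx (n-1)) = 4*3^i" by (simp only: n1 Mx_c1) simp
      have eA: "A (n-1) = (real i + 1) * (real i + 4) / 2" by (simp only: n1 A_c1)
      have "q_seq (g d) (n-1) \<le> real (Mx (n-1))^d * (A (n-1) + \<epsilon> * q_seq (g 0) (n-1))"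
        unfolding \<epsilon>_def by (rule U2)
      also have "\<dots> \<le> ((4::real)*3^i)^d * ((real i + 1) * (real i + 4) / 2 + 1/2)"
        unfolding e eA using ab by (intro mult_left_mono) auto
      finally show ?thesis .
    qed
    have b: "q_seq (g d) (n+1) \<le> ((3::real)^(i+2))^d * (3/2)"
    proof -
      have n1: "n+1 = 3*(i+2)" using ni by simp
      have e: "real (Mx (n+1)) = 3^(i+2)" by (simp only: n1 Mx_c0) simp
      have eA: "A (n+1) = 1" by (simp only: n1 A_c0)
      have "q_seq (g d) (n+1) \<le> real (Mx (n+1))^d * (A (n+1) + \<epsilon> * q_seq (g 0) (n+1))"
        unfolding \<epsilon>_def by (rule U2)
      also have "\<dots> \<le> ((3::real)^(i+2))^d * (3/2)"
        unfolding e eA using ab by (intro mult_left_mono) auto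
      finally show ?thesis .
    qed
    have c: "(real i + 2) * ((2::real)*3^(i+1))^d \<le> q_seq (g d) n"
    proof -
      have n1: "n = 3*(i+1)+2" using ni by simp
      show ?thesis unfolding n1 using L2[where d=d and k="i+1"] by (simp add: add.commute)
    qed
    define X where "X = ((2::real)*3^(i+1)*(2*3^(i+1)))^d"
    have X0: "X > 0" by (simp add: X_def)
    have K: "((real i + 1) * (real i + 4) / 2 + 1/2) * (3/2) \<le> (real i + 2)^2"
      by (simp add: power2_eq_square field_simps)
    have "q_seq (g d) (n-1) * q_seq (g d) (n+1) \<le>
        (((4::real)*3^i)^d * ((real i + 1) * (real i + 4) / 2 + 1/2)) * (((3::real)^(i+2))^d * (3/2))"
      using a b QN[where e=d and n="n-1"] QN[where e=d and n="n+1"] by (intro mult_mono) auto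
    also have "\<dots> = X * (((real i + 1) * (real i + 4) / 2 + 1/2) * (3/2))"
    proof -
      have "((4::real)*3^i)^d * ((3::real)^(i+2))^d = X"
      proof -
        have "(4::real)*3^i*3^(i+2) = 2*3^(i+1)*(2*3^(i+1))" by (simp add: algebra_simps)
        thus ?thesis unfolding X_def by (metis power_mult_distrib)
      qed
      thus ?thesis by (simp add: algebra_simps)
    qed
    also have "\<dots> \<le> X * (real i + 2)^2" using K X0 by (intro mult_left_mono) auto
    also have "\<dots> = ((real i + 2) * ((2::real)*3^(i+1))^d)^2"
      unfolding X_def by (rule sq_aux2)
    also have "\<dots> \<le> (q_seq (g d) n)^2" using c by (intro power_mono) auto
    finally show ?thesis using ratio_ge[OF den] 3 by auto
  qed
qed


end
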